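(* Let $\mathbb{H}$ be a Hilbert space with norm $\|\cdot\|$ and let $\mathcal{D}=\{\phi_j\}_{j\in\mathbb{N}^*}$ be an orthonormal basis of $\mathbb{H}$; set $\mathcal{D}_p=\{\phi_1,\dots,\phi_p\}$. Let $1<q<2$, $r>0$, $R>0$ and $f\in w\mathcal{L}_q(R)\cap\mathcal{B}^r_{2,\infty}(R)$. For $p\in\mathbb{N}^*$ and $\beta>0$ let $$f_{p,\beta}=\arg\min_{h\in\mathcal{L}_1(\mathcal{D}_p)}\big(\|f-h\|^2+\beta\|h\|_{\mathcal{L}_1(\mathcal{D}_p)}\big).$$ Then there exists $C_q>0$ depending only on $q$ such that for all $p\in\mathbb{N}^*$ and $\beta>0$, $$\|f_{p,\beta}\|_{\mathcal{L}_1(\mathcal{D}_p)}\le C_qR^q\beta^{1-q}\quad\text{and}\quad\|f-f_{p,\beta}\|\le R(p+1)^{-r}+\sqrt{C_q}\,R^{q/2}\beta^{1-q/2}.$$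
   Context: $\mathcal{L}_1(\mathcal{D}_p)$ is the span of $\phi_1,\dots,\phi_p$ with norm $\|h\|_{\mathcal{L}_1(\mathcal{D}_p)}=\inf\{\sum_{j=1}^p|\theta_j|:h=\sum_j\theta_j\phi_j\}$. Writing $g=\sum_{j\ge1}\theta_j\phi_j$: $g\in\mathcal{B}^r_{2,\infty}(R)$ iff $\sup_{J\in\mathbb{N}^*}\big(J^{2r}\sum_{j\ge J}\theta_j^2\big)\le R^2$; $g\in w\mathcal{L}_q(R)$ iff $\sup_{\eta>0}\big(\eta^q\sum_{j\ge1}\mathbf{1}\{|\theta_j|>\eta\}\big)\le R^q$. *)

theory Defs
  imports "HOL-Analysis.Analysis"
begin

text \<open>The basis is indexed by the positive integers: only phi j with j >= 1 is used.\<close>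

definition orthonormal_basis :: "(nat \<Rightarrow> 'a::{real_inner,complete_space}) \<Rightarrow> bool" where
  "orthonormal_basis \<phi> \<longleftrightarrow>
     (\<forall>i\<ge>1. \<forall>j\<ge>1. \<phi> i \<bullet> \<phi> j = (if i = j then 1 else 0)) \<and>
     closure (span (\<phi> ` {1..})) = UNIV"

definition L1_space :: "(nat \<Rightarrow> 'a::real_inner) \<Rightarrow> nat \<Rightarrow> 'a set" where
  "L1_space \<phi> p = {(\<Sum>j=1..p. \<theta> j *\<^sub>R \<phi> j) | \<theta>. True}"

definition L1_norm :: "(nat \<Rightarrow> 'a::real_inner) \<Rightarrow> nat \<Rightarrow> 'a \<Rightarrow> real" where
  "L1_norm \<phi> p h = Inf {(\<Sum>j=1..p. \<bar>\<theta> j\<bar>) | \<theta>. h = (\<Sum>j=1..p. \<theta> j *\<^sub>R \<phi> j)}"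

definition besov_ball :: "(nat \<Rightarrow> 'a::real_inner) \<Rightarrow> real \<Rightarrow> real \<Rightarrow> 'a \<Rightarrow> bool" where
  "besov_ball \<phi> r R g \<longleftrightarrow>
     (\<forall>J::nat\<ge>1. real J powr (2 * r) * (\<Sum>k. (g \<bullet> \<phi> (k + J))\<^sup>2) \<le> R\<^sup>2)"

text \<open>Weak L_q ball wL_q(R); the counting number must be finite (otherwise it is infinite).\<close>

definition weak_Lq_ball :: "(nat \<Rightarrow> 'a::real_inner) \<Rightarrow> real \<Rightarrow> real \<Rightarrow> 'a \<Rightarrow> bool" where
  "weak_Lq_ball \<phi> q R g \<longleftrightarrow>
     (\<forall>\<eta>>0. finite {j. j \<ge> 1 \<and> \<bar>g \<bullet> \<phi> j\<bar> > \<eta>} \<and>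
            \<eta> powr q * real (card {j. j \<ge> 1 \<and> \<bar>g \<bullet> \<phi> j\<bar> > \<eta>}) \<le> R powr q)"

definition is_L1_penalized_min ::
  "(nat \<Rightarrow> 'a::real_inner) \<Rightarrow> nat \<Rightarrow> real \<Rightarrow> 'a \<Rightarrow> 'a \<Rightarrow> bool" where
  "is_L1_penalized_min \<phi> p \<beta> f h \<longleftrightarrow>
     h \<in> L1_space \<phi> p \<and>
     (\<forall>h'\<in>L1_space \<phi> p. (norm (f - h))\<^sup>2 + \<beta> * L1_norm \<phi> p h
                            \<le> (norm (f - h'))\<^sup>2 + \<beta> * L1_norm \<phi> p h')"

end

theory Submission
  imports Defs
begin

definition ON :: "(nat \<Rightarrow> 'a::real_inner) \<Rightarrow> bool" where
 "ON \<phi> \<longleftrightarrow> (\<forall>i\<ge>1. \<forall>j\<ge>1. \<phi> i \<bullet> \<phi> j = (if i = j then 1 else 0))"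

lemma inner_sum_phi:
  assumes "ON \<phi>" "finite S" "S \<subseteq> {1..}" "i \<ge> 1"
  shows "(\<Sum>j\<in>S. c j *\<^sub>R \<phi> j) \<bullet> \<phi> i = (if i \<in> S then c i else 0)"
proof -
  have "(\<Sum>j\<in>S. c j *\<^sub>R \<phi> j) \<bullet> \<phi> i = (\<Sum>j\<in>S. c j * (\<phi> j \<bullet> \<phi> i))"
    by (simp add: inner_sum_left)
  also have "\<dots> = (\<Sum>j\<in>S. if j = i then c j else 0)"
    using assms by (intro sum.cong) (auto simp: ON_def)
  also have "\<dots> = (if i \<in> S then c i else 0)"
    using assms(2) by (simp add: sum.delta)
  finally show ?thesis .
qed

lemma norm_id:
  assumes "ON \<phi>" "finite S" "S \<subseteq> {1..}"
  shows "(norm (f - (\<Sum>j\<in>S. c j *\<^sub>R \<phi> j)))\<^sup>2 =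
     (norm f)\<^sup>2 - (\<Sum>j\<in>S. (f \<bullet> \<phi> j)\<^sup>2) + (\<Sum>j\<in>S. (f \<bullet> \<phi> j - c j)\<^sup>2)"
proof -
  define v where "v = (\<Sum>j\<in>S. c j *\<^sub>R \<phi> j)"
  have fv: "f \<bullet> v = (\<Sum>j\<in>S. c j * (f \<bullet> \<phi> j))"
    by (simp add: v_def inner_sum_right)
  have vv: "v \<bullet> v = (\<Sum>j\<in>S. c j * c j)"
  proof -
    have "v \<bullet> (\<Sum>j\<in>S. c j *\<^sub>R \<phi> j) = (\<Sum>j\<in>S. c j * (v \<bullet> \<phi> j))"
      by (simp add: inner_sum_right)
    hence "v \<bullet> v = (\<Sum>j\<in>S. c j * (v \<bullet> \<phi> j))"
      by (simp add: v_def[symmetric])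
    also have "\<dots> = (\<Sum>j\<in>S. c j * c j)"
    proof (rule sum.cong[OF refl])
      fix j assume j: "j \<in> S"
      hence "j \<ge> 1" using assms(3) by auto
      thus "c j * (v \<bullet> \<phi> j) = c j * c j"
        unfolding v_def using inner_sum_phi[OF assms, of j c] j by simp
    qed
    finally show ?thesis .
  qed
  have ff: "f \<bullet> f = norm f * norm f" by (metis power2_norm_eq_inner power2_eq_square)
  have "(norm (f - v))\<^sup>2 = f \<bullet> f - 2 * (f \<bullet> v) + v \<bullet> v"
    by (simp add: power2_norm_eq_inner inner_diff inner_commute)
  also have "\<dots> = (norm f)\<^sup>2 - (\<Sum>j\<in>S. (f \<bullet> \<phi> j)\<^sup>2) + (\<Sum>j\<in>S. (f \<bullet> \<phi> j - c j)\<^sup>2)"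
    using ff by (simp add: fv vv power2_eq_square algebra_simps
        sum.distrib sum_subtractf sum_distrib_left)
  finally show ?thesis by (simp add: v_def)
qed

lemma pow_powr: "0 < (x::real) \<Longrightarrow> (x ^ k) powr y = (x powr y) ^ k"
  by (simp add: powr_realpow[symmetric] powr_powr powr_power mult.commute)

lemma lc1:
  assumes "0 < (a::real)" "t \<le> a * 2 ^ (M+1)"
  shows "(if t > a then t else 0) \<le> (\<Sum>k\<le>M. if t > a * 2 ^ k then 2 * (a * 2 ^ k) else 0)"
  using assms(2)
proof (induction M)
  case 0 then show ?case by auto
next
  case (Suc M)
  have nn: "0 \<le> (\<Sum>k\<le>M. if t > a * 2 ^ k then 2 * (a * 2 ^ k) else (0::real))"
    using assms(1) by (intro sum_nonneg) auto
  show ?case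
  proof (cases "t \<le> a * 2 ^ (M+1)")
    case True
    with Suc.IH have "(if t > a then t else 0) \<le> (\<Sum>k\<le>M. if t > a * 2 ^ k then 2 * (a * 2 ^ k) else 0)" .
    also have "\<dots> \<le> (\<Sum>k\<le>Suc M. if t > a * 2 ^ k then 2 * (a * 2 ^ k) else 0)"
      using assms(1) by simp
    finally show ?thesis .
  next
    case False
    hence "t > a * 2 ^ Suc M" by simp
    moreover have "(1::real) \<le> 2 ^ Suc M" by (rule one_le_power) simp
    hence "a \<le> a * 2 ^ Suc M" using assms(1) by simp
    ultimately have "(if t > a then t else 0) \<le> 2 * (a * 2 ^ Suc M)"
      using Suc.prems by auto
    also have "\<dots> \<le> (\<Sum>k\<le>M. if t > a * 2 ^ k then 2 * (a * 2 ^ k) else 0) +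
        (if t > a * 2 ^ Suc M then 2 * (a * 2 ^ Suc M) else 0)"
      using nn \<open>t > a * 2 ^ Suc M\<close> by simp
    finally show ?thesis by simp
  qed
qed

lemma lc2:
  assumes "0 < (b::real)" "0 \<le> t" "t = 0 \<or> t > b / 2 ^ (M+1)"
  shows "min (t\<^sup>2) (b\<^sup>2) \<le> (\<Sum>k\<le>M. if t > b / 2 ^ (k+1) then 4 * (b / 2 ^ (k+1))\<^sup>2 else 0)"
  using assms(3)
proof (induction M)
  case 0 then show ?case using assms by (auto simp: power2_eq_square min_def)
next
  case (Suc M)
  have nn: "0 \<le> (\<Sum>k\<le>M. if t > b / 2 ^ (k+1) then 4 * (b / 2 ^ (k+1))\<^sup>2 else (0::real))"
    by (intro sum_nonneg) auto
  show ?case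
  proof (cases "t = 0 \<or> t > b / 2 ^ (M+1)")
    case True
    with Suc.IH have "min (t\<^sup>2) (b\<^sup>2) \<le> (\<Sum>k\<le>M. if t > b / 2 ^ (k+1) then 4 * (b / 2 ^ (k+1))\<^sup>2 else 0)" .
    also have "\<dots> \<le> (\<Sum>k\<le>Suc M. if t > b / 2 ^ (k+1) then 4 * (b / 2 ^ (k+1))\<^sup>2 else 0)"
      by simp
    finally show ?thesis .
  next
    case False
    hence t1: "t \<le> b / 2 ^ (M+1)" by simp
    have t2: "t > b / 2 ^ (Suc M + 1)" using Suc.prems False by auto
    have "min (t\<^sup>2) (b\<^sup>2) \<le> t\<^sup>2" by simp
    also have "\<dots> \<le> (b / 2 ^ (M+1))\<^sup>2" using t1 assms(2) by (intro power_mono) auto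
    also have "\<dots> = 4 * (b / 2 ^ (Suc M + 1))\<^sup>2" by (simp add: power2_eq_square field_simps)
    also have "\<dots> \<le> (\<Sum>k\<le>M. if t > b / 2 ^ (k+1) then 4 * (b / 2 ^ (k+1))\<^sup>2 else 0) +
        (if t > b / 2 ^ (Suc M + 1) then 4 * (b / 2 ^ (Suc M + 1))\<^sup>2 else 0)"
      using nn t2 by simp
    finally show ?thesis by simp
  qed
qed

lemma sum_swap_count:
  assumes "finite S"
  shows "(\<Sum>j\<in>S. \<Sum>k\<le>M. if t j > e k then w k else (0::real)) = (\<Sum>k\<le>M. w k * real (card {j\<in>S. t j > e k}))"
proof -
  have "(\<Sum>j\<in>S. \<Sum>k\<le>M. if t j > e k then w k else (0::real)) = (\<Sum>k\<le>M. \<Sum>j\<in>S. if t j > e k then w k else 0)"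
    by (rule sum.swap)
  also have "\<dots> = (\<Sum>k\<le>M. w k * real (card {j\<in>S. t j > e k}))"
  proof (rule sum.cong[OF refl])
    fix k
    have "(\<Sum>j\<in>S. if t j > e k then w k else 0) = (\<Sum>j\<in>{j\<in>S. t j > e k}. w k)"
      by (rule sum.inter_filter[symmetric, OF assms])
    thus "(\<Sum>j\<in>S. if t j > e k then w k else 0) = w k * real (card {j\<in>S. t j > e k})" by (simp add: mult.commute)
  qed
  finally show ?thesis .
qed

lemma geom_le: "0 \<le> (x::real) \<Longrightarrow> x < 1 \<Longrightarrow> (\<Sum>k\<le>M. x ^ k) \<le> 1 / (1 - x)"
  using sum_le_suminf[of "\<lambda>k. x ^ k" "{..M}"] suminf_geometric[of x] summable_geometric[of x]
  by auto

lemma cardb: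
  assumes "0 < (e::real)" "e powr q * c \<le> Q" "0 \<le> w"
  shows "w * c \<le> w * Q / e powr q"
proof -
  have ep: "0 < e powr q" using assms(1) by simp
  have "c \<le> Q / e powr q" using assms(2) ep by (simp add: pos_le_divide_eq mult.commute)
  hence "w * c \<le> w * (Q / e powr q)" by (rule mult_left_mono[OF _ assms(3)])
  thus ?thesis by simp
qed

lemma est1:
  fixes t :: "nat \<Rightarrow> real"
  assumes fin: "finite S" and nn: "\<forall>j\<in>S. 0 \<le> t j" and a: "0 < a" and q: "1 < q"
    and cnt: "\<forall>\<eta>>0. \<eta> powr q * real (card {j\<in>S. t j > \<eta>}) \<le> Q"
  shows "(\<Sum>j\<in>S. if t j > a then t j else 0) \<le> 2 * Q * a powr (1-q) / (1 - 2 powr (1-q))"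
proof -
  define m where "m = Max (insert 0 (t ` S))"
  have tm: "\<forall>j\<in>S. t j \<le> m" using fin by (auto simp: m_def)
  obtain M where M: "m / a < 2 ^ M" using real_arch_pow[of 2 "m / a"] by auto
  have tM: "\<forall>j\<in>S. t j \<le> a * 2 ^ (M+1)"
  proof
    fix j assume "j \<in> S"
    hence "t j \<le> m" using tm by auto
    also have "m \<le> a * 2 ^ M" using M a by (simp add: field_simps)
    also have "\<dots> \<le> a * 2 ^ (M+1)" using a by simp
    finally show "t j \<le> a * 2 ^ (M+1)" .
  qed
  define x where "x = (2::real) powr (1-q)"
  have x0: "0 \<le> x" "x < 1" using q by (auto simp: x_def intro: powr_less_one)
  have Q0: "0 \<le> Q"
  proof -
    have "real (card {j\<in>S. t j > 1}) \<le> Q" using cnt[rule_format, of 1] by simp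
    thus ?thesis using of_nat_0_le_iff order_trans by blast
  qed
  have "(\<Sum>j\<in>S. if t j > a then t j else 0) \<le>
        (\<Sum>j\<in>S. \<Sum>k\<le>M. if t j > a * 2 ^ k then 2 * (a * 2 ^ k) else 0)"
    using tM a by (intro sum_mono lc1) auto
  also have "\<dots> = (\<Sum>k\<le>M. 2 * (a * 2 ^ k) * real (card {j\<in>S. t j > a * 2 ^ k}))"
    by (rule sum_swap_count[OF fin])
  also have "\<dots> \<le> (\<Sum>k\<le>M. 2 * Q * a powr (1-q) * x ^ k)"
  proof (rule sum_mono)
    fix k
    have e: "0 < a * 2 ^ k" using a by simp
    have "2 * (a * 2 ^ k) * real (card {j\<in>S. t j > a * 2 ^ k}) \<le> 2 * (a * 2 ^ k) * Q / (a * 2 ^ k) powr q"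
      using e cnt by (intro cardb) auto
    also have "\<dots> = 2 * Q * ((a * 2 ^ k) powr 1 / (a * 2 ^ k) powr q)" using e by simp
    also have "\<dots> = 2 * Q * (a * 2 ^ k) powr (1 - q)" by (simp add: powr_diff)
    also have "\<dots> = 2 * Q * a powr (1-q) * x ^ k"
      using a by (simp add: powr_mult pow_powr x_def)
    finally show "2 * (a * 2 ^ k) * real (card {j\<in>S. t j > a * 2 ^ k}) \<le> 2 * Q * a powr (1-q) * x ^ k" .
  qed
  also have "\<dots> = 2 * Q * a powr (1-q) * (\<Sum>k\<le>M. x ^ k)" by (simp add: sum_distrib_left)
  also have "\<dots> \<le> 2 * Q * a powr (1-q) * (1 / (1 - x))"
    using geom_le[OF x0] Q0 by (intro mult_left_mono) auto
  finally show ?thesis by (simp add: x_def)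
qed

lemma est2:
  fixes t :: "nat \<Rightarrow> real"
  assumes fin: "finite S" and nn: "\<forall>j\<in>S. 0 \<le> t j" and b: "0 < b" and q: "q < 2"
    and cnt: "\<forall>\<eta>>0. \<eta> powr q * real (card {j\<in>S. t j > \<eta>}) \<le> Q"
  shows "(\<Sum>j\<in>S. min ((t j)\<^sup>2) (b\<^sup>2)) \<le>
     4 * Q * b powr (2-q) * ((1/2) powr (2-q)) / (1 - (1/2) powr (2-q))"
proof -
  obtain M where M: "\<forall>j\<in>S. t j = 0 \<or> t j > b / 2 ^ (M+1)"
  proof (cases "{j\<in>S. t j > 0} = {}")
    case True
    thus ?thesis using that[of 0] nn by force
  next
    case False
    define m where "m = Min (t ` {j\<in>S. t j > 0})"
    have m0: "0 < m" using False fin by (auto simp: m_def)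
    have tm: "\<forall>j\<in>S. t j > 0 \<longrightarrow> m \<le> t j" using fin by (auto simp: m_def)
    obtain n where n: "b / m < 2 ^ n" using real_arch_pow[of 2 "b / m"] by auto
    have "b / 2 ^ (n+1) < m"
    proof -
      have "b < m * 2 ^ n" using n m0 by (simp add: field_simps)
      also have "\<dots> \<le> m * 2 ^ (n+1)" using m0 by simp
      finally show ?thesis by (simp add: field_simps)
    qed
    thus ?thesis using that[of n] tm nn by force
  qed
  define z where "z = ((1::real)/2) powr (2-q)"
  have "((1::real)/2) powr (2-q) < (1/2) powr 0" using q by (intro powr_less_mono') auto
  hence z0: "0 \<le> z" "z < 1" by (auto simp: z_def)
  have Q0: "0 \<le> Q"
  proof -
    have "real (card {j\<in>S. t j > 1}) \<le> Q" using cnt[rule_format, of 1] by simp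
    thus ?thesis using of_nat_0_le_iff order_trans by blast
  qed
  have "(\<Sum>j\<in>S. min ((t j)\<^sup>2) (b\<^sup>2)) \<le>
        (\<Sum>j\<in>S. \<Sum>k\<le>M. if t j > b / 2 ^ (k+1) then 4 * (b / 2 ^ (k+1))\<^sup>2 else 0)"
    using M nn b by (intro sum_mono lc2) auto
  also have "\<dots> = (\<Sum>k\<le>M. 4 * (b / 2 ^ (k+1))\<^sup>2 * real (card {j\<in>S. t j > b / 2 ^ (k+1)}))"
    by (rule sum_swap_count[OF fin])
  also have "\<dots> \<le> (\<Sum>k\<le>M. 4 * Q * b powr (2-q) * z * z ^ k)"
  proof (rule sum_mono)
    fix k
    define e where "e = b / 2 ^ (k+1)"
    have e: "0 < e" using b by (simp add: e_def)
    have "4 * e\<^sup>2 * real (card {j\<in>S. t j > e}) \<le> 4 * e\<^sup>2 * Q / e powr q"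
      using e cnt by (intro cardb) auto
    also have "\<dots> = 4 * Q * (e powr 2 / e powr q)" using e by (simp add: powr_realpow)
    also have "\<dots> = 4 * Q * e powr (2 - q)" by (simp add: powr_diff)
    also have "\<dots> = 4 * Q * b powr (2-q) * z * z ^ k"
    proof -
      have ee: "e = b * (1/2) ^ (k+1)" by (simp add: e_def power_one_over)
      have 1: "(b * (1/2) ^ (k+1)) powr (2 - q) = b powr (2-q) * ((1/2) ^ (k+1)) powr (2-q)" by (rule powr_mult)
      have 2: "((1/2::real) ^ (k+1)) powr (2-q) = z ^ (k+1)" unfolding z_def by (rule pow_powr) simp
      show ?thesis unfolding ee 1 2 by simp
    qed
    finally have "4 * e\<^sup>2 * real (card {j\<in>S. t j > e}) \<le> 4 * Q * b powr (2-q) * z * z ^ k" .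
    thus "4 * (b / 2 ^ (k+1))\<^sup>2 * real (card {j\<in>S. t j > b / 2 ^ (k+1)}) \<le> 4 * Q * b powr (2-q) * z * z ^ k"
      unfolding e_def .
  qed
  also have "\<dots> = 4 * Q * b powr (2-q) * z * (\<Sum>k\<le>M. z ^ k)" by (simp add: sum_distrib_left)
  also have "\<dots> \<le> 4 * Q * b powr (2-q) * z * (1 / (1 - z))"
    using geom_le[OF z0] Q0 z0 by (intro mult_left_mono) auto
  finally show ?thesis by (simp add: z_def)
qed

lemma coord:
  fixes \<theta> c \<beta> :: real
  assumes b: "0 < \<beta>" and m: "\<And>d. (\<theta> - c)\<^sup>2 + \<beta> * \<bar>c\<bar> \<le> (\<theta> - d)\<^sup>2 + \<beta> * \<bar>d\<bar>"
  shows "\<bar>c\<bar> \<le> 2 * (if \<bar>\<theta>\<bar> > \<beta>/2 then \<bar>\<theta>\<bar> else 0)" "(\<theta> - c)\<^sup>2 \<le> min (\<bar>\<theta>\<bar>\<^sup>2) (\<beta>\<^sup>2)"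
proof -
  have m0: "(\<theta> - c)\<^sup>2 + \<beta> * \<bar>c\<bar> \<le> \<theta>\<^sup>2" using m[of 0] by simp
  have mt: "(\<theta> - c)\<^sup>2 + \<beta> * \<bar>c\<bar> \<le> \<beta> * \<bar>\<theta>\<bar>" using m[of \<theta>] by simp
  have e1: "c*c - 2*\<theta>*c + \<beta>*\<bar>c\<bar> \<le> 0" using m0 by (simp add: power2_eq_square algebra_simps)
  have e2: "\<theta>*c \<le> \<bar>\<theta>\<bar>*\<bar>c\<bar>" by (metis abs_ge_self abs_mult)
  have e3: "\<bar>c\<bar>*\<bar>c\<bar> = c*c" by simp
  have e4: "\<bar>c\<bar>*(\<bar>c\<bar> + \<beta> - 2*\<bar>\<theta>\<bar>) \<le> 0" using e1 e2 e3 by (simp add: algebra_simps)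
  show "\<bar>c\<bar> \<le> 2 * (if \<bar>\<theta>\<bar> > \<beta>/2 then \<bar>\<theta>\<bar> else 0)"
  proof (cases "c = 0")
    case True thus ?thesis by simp
  next
    case False
    hence "\<bar>c\<bar> > 0" by simp
    hence "\<bar>c\<bar> + \<beta> - 2*\<bar>\<theta>\<bar> \<le> 0" using e4 by (simp add: mult_le_0_iff)
    thus ?thesis using b by auto
  qed
  have "(\<theta> - c)\<^sup>2 \<le> \<theta>\<^sup>2" using m0 b proof -
    have "0 \<le> \<beta> * \<bar>c\<bar>" using b by simp
    thus ?thesis using m0 by linarith
  qed
  moreover have "(\<theta> - c)\<^sup>2 \<le> \<beta>\<^sup>2"
  proof -
    define u where "u = \<bar>\<theta> - c\<bar>"
    have u0: "0 \<le> u" by (simp add: u_def)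
    have "\<bar>\<theta>\<bar> \<le> u + \<bar>c\<bar>" unfolding u_def using abs_triangle_ineq[of "\<theta> - c" c] by simp
    hence "\<beta> * \<bar>\<theta>\<bar> \<le> \<beta> * (u + \<bar>c\<bar>)" using b by (intro mult_left_mono) auto
    moreover have "u * u = (\<theta> - c)\<^sup>2" by (simp add: u_def power2_eq_square)
    ultimately have "u * u \<le> \<beta> * u" using mt by (simp add: algebra_simps)
    hence "u \<le> \<beta>"
    proof (cases "u = 0")
      case True thus ?thesis using b by simp
    next
      case False
      hence "u > 0" using u0 by simp
      thus ?thesis using mult_right_le_imp_le[OF \<open>u * u \<le> \<beta> * u\<close>] by simp
    qed
    hence "u\<^sup>2 \<le> \<beta>\<^sup>2" using u0 by (intro power_mono) auto
    thus ?thesis by (simp add: u_def)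
  qed
  ultimately show "(\<theta> - c)\<^sup>2 \<le> min (\<bar>\<theta>\<bar>\<^sup>2) (\<beta>\<^sup>2)" by simp
qed

lemma coef_unique:
  assumes "ON \<phi>" "j \<in> {1..p}" "(\<Sum>i=1..p. a i *\<^sub>R \<phi> i) = (\<Sum>i=1..p. b i *\<^sub>R \<phi> i)"
  shows "a j = b j"
proof -
  have j: "j \<ge> 1" using assms(2) by auto
  have "a j = (\<Sum>i=1..p. a i *\<^sub>R \<phi> i) \<bullet> \<phi> j" using inner_sum_phi[OF assms(1) _ _ j, of "{1..p}" a] assms(2) by auto
  also have "\<dots> = (\<Sum>i=1..p. b i *\<^sub>R \<phi> i) \<bullet> \<phi> j" using assms(3) by simp
  also have "\<dots> = b j" using inner_sum_phi[OF assms(1) _ _ j, of "{1..p}" b] assms(2) by auto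
  finally show ?thesis .
qed

lemma L1_norm_eq:
  assumes "ON \<phi>"
  shows "L1_norm \<phi> p (\<Sum>j=1..p. c j *\<^sub>R \<phi> j) = (\<Sum>j=1..p. \<bar>c j\<bar>)"
proof -
  have "{(\<Sum>j=1..p. \<bar>\<theta> j\<bar>) | \<theta>. (\<Sum>j=1..p. c j *\<^sub>R \<phi> j) = (\<Sum>j=1..p. \<theta> j *\<^sub>R \<phi> j)} = {\<Sum>j=1..p. \<bar>c j\<bar>}"
  proof (intro equalityI subsetI)
    fix x assume "x \<in> {(\<Sum>j=1..p. \<bar>\<theta> j\<bar>) | \<theta>. (\<Sum>j=1..p. c j *\<^sub>R \<phi> j) = (\<Sum>j=1..p. \<theta> j *\<^sub>R \<phi> j)}"
    then obtain \<theta> where x: "x = (\<Sum>j=1..p. \<bar>\<theta> j\<bar>)" and e: "(\<Sum>j=1..p. c j *\<^sub>R \<phi> j) = (\<Sum>j=1..p. \<theta> j *\<^sub>R \<phi> j)" by blast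
    have "(\<Sum>j=1..p. \<bar>\<theta> j\<bar>) = (\<Sum>j=1..p. \<bar>c j\<bar>)"
      using coef_unique[OF assms _ e] by (intro sum.cong) auto
    thus "x \<in> {\<Sum>j=1..p. \<bar>c j\<bar>}" using x by simp
  qed blast
  thus ?thesis unfolding L1_norm_def by simp
qed

lemma sum_upd:
  fixes g :: "nat \<Rightarrow> real \<Rightarrow> real" and c :: "nat \<Rightarrow> real"
  assumes "finite S" "i \<in> S"
  shows "(\<Sum>j\<in>S. g j ((c(i:=d)) j)) = (\<Sum>j\<in>S. g j (c j)) - g i (c i) + g i d"
proof -
  have "(\<Sum>j\<in>S. g j ((c(i:=d)) j)) = g i d + (\<Sum>j\<in>S-{i}. g j ((c(i:=d)) j))"
    using sum.remove[OF assms, of "\<lambda>j. g j ((c(i:=d)) j)"] by simp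
  also have "(\<Sum>j\<in>S-{i}. g j ((c(i:=d)) j)) = (\<Sum>j\<in>S-{i}. g j (c j))" by (intro sum.cong) auto
  also have "\<dots> = (\<Sum>j\<in>S. g j (c j)) - g i (c i)" using sum.remove[OF assms, of "\<lambda>j. g j (c j)"] by simp
  finally show ?thesis by simp
qed

lemma pen_coord:
  assumes ON: "ON \<phi>" and min: "is_L1_penalized_min \<phi> p \<beta> f (\<Sum>j=1..p. c j *\<^sub>R \<phi> j)"
    and i: "i \<in> {1..p}"
  shows "(f \<bullet> \<phi> i - c i)\<^sup>2 + \<beta> * \<bar>c i\<bar> \<le> (f \<bullet> \<phi> i - d)\<^sup>2 + \<beta> * \<bar>d\<bar>"
proof -
  define G where "G = (\<lambda>c. (norm (f - (\<Sum>j=1..p. c j *\<^sub>R \<phi> j)))\<^sup>2 + \<beta> * L1_norm \<phi> p (\<Sum>j=1..p. c j *\<^sub>R \<phi> j))"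
  define g where "g = (\<lambda>j x. (f \<bullet> \<phi> j - x)\<^sup>2 + \<beta> * \<bar>x\<bar>)"
  have Gc: "G c = (norm f)\<^sup>2 - (\<Sum>j=1..p. (f \<bullet> \<phi> j)\<^sup>2) + (\<Sum>j=1..p. g j (c j))" for c
  proof -
    have 1: "(\<Sum>j=1..p. g j (c j)) = (\<Sum>j=1..p. (f \<bullet> \<phi> j - c j)\<^sup>2) + \<beta> * (\<Sum>j=1..p. \<bar>c j\<bar>)"
      unfolding g_def by (simp only: sum.distrib sum_distrib_left)
    have sub: "{1..p} \<subseteq> {1::nat..}" by auto
    show ?thesis unfolding G_def 1 norm_id[OF ON finite_atLeastAtMost sub, of f c] L1_norm_eq[OF ON, of p c]
      by simp
  qed
  have mem: "(\<Sum>j=1..p. (c(i:=d)) j *\<^sub>R \<phi> j) \<in> L1_space \<phi> p" unfolding L1_space_def by blast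
  have "\<forall>h'\<in>L1_space \<phi> p. (norm (f - (\<Sum>j=1..p. c j *\<^sub>R \<phi> j)))\<^sup>2 + \<beta> * L1_norm \<phi> p (\<Sum>j=1..p. c j *\<^sub>R \<phi> j)
                            \<le> (norm (f - h'))\<^sup>2 + \<beta> * L1_norm \<phi> p h'"
    using min unfolding is_L1_penalized_min_def by (rule conjunct2)
  from bspec[OF this mem] have "G c \<le> G (c(i:=d))" unfolding G_def .
  hence "(\<Sum>j=1..p. g j (c j)) \<le> (\<Sum>j=1..p. g j ((c(i:=d)) j))" unfolding Gc by simp
  also have "\<dots> = (\<Sum>j=1..p. g j (c j)) - g i (c i) + g i d" by (rule sum_upd) (use i in auto)
  finally have "g i (c i) \<le> g i d" by linarith
  thus ?thesis by (simp only: g_def)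
qed

lemma bessel:
  assumes "ON \<phi>" "finite S" "S \<subseteq> {1..}"
  shows "(\<Sum>j\<in>S. (f \<bullet> \<phi> j)\<^sup>2) \<le> (norm f)\<^sup>2"
  using norm_id[OF assms, of f "\<lambda>j. f \<bullet> \<phi> j"] zero_le_power2[of "norm (f - (\<Sum>j\<in>S. (f \<bullet> \<phi> j) *\<^sub>R \<phi> j))"]
  by simp

lemma shift_sum: "(\<Sum>j\<in>{p+1..p+L}. g j) = (\<Sum>k<(L::nat). g (k+(p+1)))"
  by (induction L) (auto simp: add.commute)

lemma shift2: "(\<Sum>k<(n::nat). g (k + J)) = (\<Sum>j\<in>{J..<J+n}. g j)"
  by (induction n) (auto simp: add.commute)

lemma summ:
  assumes "ON \<phi>" "J \<ge> 1"
  shows "summable (\<lambda>k. (f \<bullet> \<phi> (k + J))\<^sup>2)"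
proof (rule summableI_nonneg_bounded)
  fix n
  have "(\<Sum>k<n. (f \<bullet> \<phi> (k + J))\<^sup>2) = (\<Sum>j\<in>{J..<J+n}. (f \<bullet> \<phi> j)\<^sup>2)"
    by (rule shift2)
  also have "\<dots> \<le> (norm f)\<^sup>2" using assms by (intro bessel) auto
  finally show "(\<Sum>k<n. (f \<bullet> \<phi> (k + J))\<^sup>2) \<le> (norm f)\<^sup>2" .
qed auto

lemma tail:
  assumes ob: "orthonormal_basis \<phi>" and p: "p \<ge> 1"
  shows "(norm f)\<^sup>2 - (\<Sum>j=1..p. (f \<bullet> \<phi> j)\<^sup>2) \<le> (\<Sum>k. (f \<bullet> \<phi> (k + (p+1)))\<^sup>2)"
proof (rule field_le_epsilon)
  fix \<delta> :: real assume \<delta>: "0 < \<delta>"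
  have ON: "ON \<phi>" using ob by (simp add: orthonormal_basis_def ON_def)
  define T where "T = (\<Sum>k. (f \<bullet> \<phi> (k + (p+1)))\<^sup>2)"
  have sT: "summable (\<lambda>k. (f \<bullet> \<phi> (k + (p+1)))\<^sup>2)" by (rule summ[OF ON]) simp
  have "f \<in> closure (span (\<phi> ` {1..}))" using ob by (simp add: orthonormal_basis_def)
  hence "\<forall>e>0. \<exists>y\<in>span (\<phi> ` {1..}). dist y f < e" by (simp add: closure_approachable)
  moreover have "sqrt \<delta> > 0" using \<delta> by simp
  ultimately obtain v where v: "v \<in> span (\<phi> ` {1..})" and dv: "dist v f < sqrt \<delta>"
    by blast
  obtain B u where B: "finite B" "B \<subseteq> \<phi> ` {1..}" and vB: "v = (\<Sum>x\<in>B. u x *\<^sub>R x)"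
    using v by (auto simp: span_explicit)
  obtain I where I: "I \<subseteq> {1..}" "finite I" "B = \<phi> ` I"
    using finite_subset_image[OF B] by blast
  have inj: "inj_on \<phi> I"
  proof
    fix i j assume ij: "i \<in> I" "j \<in> I" "\<phi> i = \<phi> j"
    hence "\<phi> i \<bullet> \<phi> j = \<phi> i \<bullet> \<phi> i" by simp
    thus "i = j" using ON ij I(1) unfolding ON_def by (metis atLeast_iff subsetD zero_neq_one)
  qed
  have vI: "v = (\<Sum>j\<in>I. u (\<phi> j) *\<^sub>R \<phi> j)" using vB I(3) sum.reindex[OF inj] by (simp add: o_def)
  define L where "L = Max (insert 0 I)"
  define U where "U = {1..p+L}"
  have IU: "I \<subseteq> U"
  proof
    fix x assume x: "x \<in> I"
    hence "1 \<le> x" using I(1) by auto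
    moreover have "x \<le> L" unfolding L_def using I(2) x by simp
    ultimately show "x \<in> U" unfolding U_def by simp
  qed
  define d where "d = (\<lambda>j. if j \<in> I then u (\<phi> j) else 0)"
  have vU: "v = (\<Sum>j\<in>U. d j *\<^sub>R \<phi> j)"
  proof -
    have "(\<Sum>j\<in>U. d j *\<^sub>R \<phi> j) = (\<Sum>j\<in>U. if j \<in> I then u (\<phi> j) *\<^sub>R \<phi> j else 0)"
      by (intro sum.cong) (auto simp: d_def)
    also have "\<dots> = (\<Sum>j\<in>U \<inter> I. u (\<phi> j) *\<^sub>R \<phi> j)" by (rule sum.inter_restrict[symmetric]) (simp add: U_def)
    also have "U \<inter> I = I" using IU by auto
    finally show ?thesis using vI by simp
  qed
  have "(norm (f - v))\<^sup>2 = (norm f)\<^sup>2 - (\<Sum>j\<in>U. (f \<bullet> \<phi> j)\<^sup>2) + (\<Sum>j\<in>U. (f \<bullet> \<phi> j - d j)\<^sup>2)"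
    unfolding vU by (rule norm_id[OF ON]) (auto simp: U_def)
  moreover have "(norm (f - v))\<^sup>2 < \<delta>"
  proof -
    have "norm (f - v) < sqrt \<delta>" using dv by (simp add: dist_norm norm_minus_commute)
    hence "(norm (f - v))\<^sup>2 < (sqrt \<delta>)\<^sup>2" by (intro power_strict_mono) auto
    thus ?thesis using \<delta> by simp
  qed
  moreover have "0 \<le> (\<Sum>j\<in>U. (f \<bullet> \<phi> j - d j)\<^sup>2)" by (intro sum_nonneg) auto
  ultimately have 1: "(norm f)\<^sup>2 - (\<Sum>j\<in>U. (f \<bullet> \<phi> j)\<^sup>2) < \<delta>" by linarith
  have "(\<Sum>j\<in>U. (f \<bullet> \<phi> j)\<^sup>2) = (\<Sum>j=1..p. (f \<bullet> \<phi> j)\<^sup>2) + (\<Sum>j\<in>{p+1..p+L}. (f \<bullet> \<phi> j)\<^sup>2)"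
    unfolding U_def by (rule sum.ub_add_nat) simp
  also have "(\<Sum>j\<in>{p+1..p+L}. (f \<bullet> \<phi> j)\<^sup>2) = (\<Sum>k<L. (f \<bullet> \<phi> (k + (p+1)))\<^sup>2)"
    by (rule shift_sum)
  also have "\<dots> \<le> T" unfolding T_def using sT by (intro sum_le_suminf) auto
  finally have "(\<Sum>j\<in>U. (f \<bullet> \<phi> j)\<^sup>2) \<le> (\<Sum>j=1..p. (f \<bullet> \<phi> j)\<^sup>2) + T" by simp
  thus "(norm f)\<^sup>2 - (\<Sum>j=1..p. (f \<bullet> \<phi> j)\<^sup>2) \<le> (\<Sum>k. (f \<bullet> \<phi> (k + (p+1)))\<^sup>2) + \<delta>"
    using 1 unfolding T_def by linarith
qed

lemma sqrt_powr: "0 < (x::real) \<Longrightarrow> sqrt (x powr a) = x powr (a/2)"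
  by (simp add: powr_half_sqrt[symmetric] powr_powr)

theorem lemma8p5:
  fixes q :: real
  assumes "1 < q" and "q < 2"
  shows "\<exists>C>0. \<forall>(\<phi>::nat \<Rightarrow> 'a::{real_inner,complete_space}) r R f p \<beta> h.
           orthonormal_basis \<phi> \<and> r > 0 \<and> R > 0 \<and>
           weak_Lq_ball \<phi> q R f \<and> besov_ball \<phi> r R f \<and>
           p \<ge> 1 \<and> \<beta> > 0 \<and> is_L1_penalized_min \<phi> p \<beta> f h \<longrightarrow>
             L1_norm \<phi> p h \<le> C * R powr q * \<beta> powr (1 - q) \<and>
             norm (f - h) \<le> R * real (p + 1) powr (- r) + sqrt C * R powr (q / 2) * \<beta> powr (1 - q / 2)"
proof -
  define x where "x = (2::real) powr (1-q)"
  define z where "z = ((1::real)/2) powr (2-q)"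
  have x0: "0 < x" "x < 1" using assms by (auto simp: x_def intro: powr_less_one)
  have "((1::real)/2) powr (2-q) < (1/2) powr 0" using assms by (intro powr_less_mono') auto
  hence z0: "0 < z" "z < 1" by (auto simp: z_def)
  define C1 where "C1 = 4 / (x * (1 - x))"
  define C2 where "C2 = 4 * z / (1 - z)"
  have C1: "0 < C1" using x0 by (simp add: C1_def)
  have C2: "0 < C2" using z0 by (simp add: C2_def)
  define C where "C = C1 + C2"
  show ?thesis
  proof (rule exI[of _ C], rule conjI)
    show "0 < C" using C1 C2 by (simp add: C_def)
  next
    show "\<forall>(\<phi>::nat \<Rightarrow> 'a::{real_inner,complete_space}) r R f p \<beta> h.
           orthonormal_basis \<phi> \<and> r > 0 \<and> R > 0 \<and>
           weak_Lq_ball \<phi> q R f \<and> besov_ball \<phi> r R f \<and>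
           p \<ge> 1 \<and> \<beta> > 0 \<and> is_L1_penalized_min \<phi> p \<beta> f h \<longrightarrow>
             L1_norm \<phi> p h \<le> C * R powr q * \<beta> powr (1 - q) \<and>
             norm (f - h) \<le> R * real (p + 1) powr (- r) + sqrt C * R powr (q / 2) * \<beta> powr (1 - q / 2)"
    proof (intro allI impI)
    fix \<phi> :: "nat \<Rightarrow> 'a" and r R f p \<beta> h
    assume H: "orthonormal_basis \<phi> \<and> r > 0 \<and> R > 0 \<and>
           weak_Lq_ball \<phi> q R f \<and> besov_ball \<phi> r R f \<and>
           p \<ge> 1 \<and> \<beta> > 0 \<and> is_L1_penalized_min \<phi> p \<beta> f h"
    hence ob: "orthonormal_basis \<phi>" and r: "r > 0" and R: "R > 0" and wq: "weak_Lq_ball \<phi> q R f"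
      and bs: "besov_ball \<phi> r R f" and p: "p \<ge> 1" and b: "\<beta> > 0" and mn: "is_L1_penalized_min \<phi> p \<beta> f h"
      by auto
    have ON: "ON \<phi>" using ob by (simp add: orthonormal_basis_def ON_def)
    obtain c where hc: "h = (\<Sum>j=1..p. c j *\<^sub>R \<phi> j)"
      using mn by (auto simp: is_L1_penalized_min_def L1_space_def)
    define t where "t = (\<lambda>j. \<bar>f \<bullet> \<phi> j\<bar>)"
    define Q where "Q = R powr q"
    have co: "\<bar>c i\<bar> \<le> 2 * (if t i > \<beta>/2 then t i else 0)" "(f \<bullet> \<phi> i - c i)\<^sup>2 \<le> min ((t i)\<^sup>2) (\<beta>\<^sup>2)"
      if "i \<in> {1..p}" for i
      using coord[OF b pen_coord[OF ON mn[unfolded hc] that]] by (auto simp: t_def)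
    have cnt: "\<forall>\<eta>>0. \<eta> powr q * real (card {j\<in>{1..p}. t j > \<eta>}) \<le> Q"
    proof (intro allI impI)
      fix \<eta> :: real assume e: "0 < \<eta>"
      have fin: "finite {j. j \<ge> 1 \<and> \<bar>f \<bullet> \<phi> j\<bar> > \<eta>}" and
        le: "\<eta> powr q * real (card {j. j \<ge> 1 \<and> \<bar>f \<bullet> \<phi> j\<bar> > \<eta>}) \<le> R powr q"
        using wq e unfolding weak_Lq_ball_def by auto
      have "card {j\<in>{1..p}. t j > \<eta>} \<le> card {j. j \<ge> 1 \<and> \<bar>f \<bullet> \<phi> j\<bar> > \<eta>}"
        using fin by (intro card_mono) (auto simp: t_def)
      hence "\<eta> powr q * real (card {j\<in>{1..p}. t j > \<eta>}) \<le> \<eta> powr q * real (card {j. j \<ge> 1 \<and> \<bar>f \<bullet> \<phi> j\<bar> > \<eta>})"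
        by (intro mult_left_mono) auto
      thus "\<eta> powr q * real (card {j\<in>{1..p}. t j > \<eta>}) \<le> Q" using le by (simp add: Q_def)
    qed
    have tn: "\<forall>j\<in>{1..p}. 0 \<le> t j" by (simp add: t_def)
    have Q0: "0 < Q" using R by (simp add: Q_def)
    have "L1_norm \<phi> p h = (\<Sum>j=1..p. \<bar>c j\<bar>)" using L1_norm_eq[OF ON] hc by simp
    also have "\<dots> \<le> (\<Sum>j=1..p. 2 * (if t j > \<beta>/2 then t j else 0))" by (intro sum_mono co) auto
    also have "\<dots> = 2 * (\<Sum>j=1..p. (if t j > \<beta>/2 then t j else 0))" by (simp add: sum_distrib_left)
    also have "\<dots> \<le> 2 * (2 * Q * (\<beta>/2) powr (1-q) / (1 - 2 powr (1-q)))"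
    proof -
      have E: "(\<Sum>j=1..p. (if t j > \<beta>/2 then t j else 0)) \<le> 2 * Q * (\<beta>/2) powr (1-q) / (1 - 2 powr (1-q))"
        by (rule est1[OF _ tn _ assms(1) cnt]) (use b in auto)
      show ?thesis by (rule mult_left_mono[OF E]) simp
    qed
    also have "\<dots> = C1 * Q * \<beta> powr (1 - q)"
    proof -
      have bx: "(\<beta>/2) powr (1-q) = \<beta> powr (1-q) / x" by (simp add: powr_divide x_def)
      have "x \<noteq> 0" "1 - x \<noteq> 0" using x0 by auto
      thus ?thesis unfolding bx C1_def x_def[symmetric] by (simp add: field_simps)
    qed
    also have "\<dots> \<le> C * Q * \<beta> powr (1 - q)" using C2 Q0 by (intro mult_right_mono) (auto simp: C_def)
    finally have L1: "L1_norm \<phi> p h \<le> C * R powr q * \<beta> powr (1 - q)" by (simp add: Q_def)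
    define A where "A = (norm f)\<^sup>2 - (\<Sum>j=1..p. (f \<bullet> \<phi> j)\<^sup>2)"
    define B where "B = (\<Sum>j=1..p. (f \<bullet> \<phi> j - c j)\<^sup>2)"
    have nAB: "(norm (f - h))\<^sup>2 = A + B" unfolding hc A_def B_def by (rule norm_id[OF ON]) auto
    have A0: "0 \<le> A" unfolding A_def using bessel[OF ON, of "{1..p}" f] by auto
    have B0: "0 \<le> B" unfolding B_def by (intro sum_nonneg) auto
    define T where "T = (\<Sum>k. (f \<bullet> \<phi> (k + (p+1)))\<^sup>2)"
    have AT: "A \<le> T" unfolding A_def T_def by (rule tail[OF ob p])
    have "real (p+1) powr (2*r) * T \<le> R\<^sup>2"
      using bs[unfolded besov_ball_def, rule_format, of "p+1"] unfolding T_def by simp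
    moreover have X0: "real (p+1) powr (2*r) > 0" by simp
    ultimately have "T \<le> R\<^sup>2 / real (p+1) powr (2*r)" by (simp add: pos_le_divide_eq mult.commute)
    also have "\<dots> = (R * real (p + 1) powr (- r))\<^sup>2"
    proof -
      define P where "P = real (p+1) powr r"
      have P1: "real (p+1) > 0" by simp
      have P0: "P > 0" unfolding P_def using P1 by (simp only: powr_gt_zero)
      have "real (p+1) powr (2*r) = real (p+1) powr (r + r)" by (simp only: mult_2)
      also have "\<dots> = P * P" unfolding P_def by (rule powr_add)
      finally have 1: "real (p+1) powr (2*r) = P * P" .
      have 2: "real (p + 1) powr (- r) = 1 / P" unfolding P_def by (rule powr_minus_divide)
      show ?thesis unfolding 1 2 using P0 by (simp add: power2_eq_square)
    qed
    finally have "A \<le> (R * real (p + 1) powr (- r))\<^sup>2" using AT by linarith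
    hence "sqrt A \<le> sqrt ((R * real (p + 1) powr (- r))\<^sup>2)" by (rule real_sqrt_le_mono)
    hence sA: "sqrt A \<le> R * real (p + 1) powr (- r)" using R by simp
    have "B \<le> (\<Sum>j=1..p. min ((t j)\<^sup>2) (\<beta>\<^sup>2))" unfolding B_def by (intro sum_mono co) auto
    also have "\<dots> \<le> 4 * Q * \<beta> powr (2-q) * ((1/2) powr (2-q)) / (1 - (1/2) powr (2-q))"
      by (rule est2[OF _ tn b assms(2) cnt]) simp
    also have "\<dots> = C2 * Q * \<beta> powr (2-q)" unfolding C2_def z_def by (simp add: mult_ac)
    also have "\<dots> \<le> C * Q * \<beta> powr (2-q)" using C1 Q0 by (intro mult_right_mono) (auto simp: C_def)
    finally have "sqrt B \<le> sqrt (C * Q * \<beta> powr (2-q))" by (rule real_sqrt_le_mono)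
    also have "\<dots> = sqrt C * R powr (q/2) * \<beta> powr (1 - q/2)"
    proof -
      have 1: "sqrt Q = R powr (q/2)" unfolding Q_def by (rule sqrt_powr[OF R])
      have "sqrt (\<beta> powr (2-q)) = \<beta> powr ((2-q)/2)" by (rule sqrt_powr[OF b])
      also have "(2-q)/2 = 1 - q/2" by simp
      finally have 2: "sqrt (\<beta> powr (2-q)) = \<beta> powr (1 - q/2)" .
      show ?thesis by (simp only: real_sqrt_mult 1 2)
    qed
    finally have sB: "sqrt B \<le> sqrt C * R powr (q/2) * \<beta> powr (1 - q/2)" .
    have "norm (f - h) = sqrt ((norm (f - h))\<^sup>2)" by simp
    also have "\<dots> = sqrt (A + B)" by (simp only: nAB)
    also have "\<dots> \<le> sqrt A + sqrt B" by (rule sqrt_add_le_add_sqrt[OF A0 B0])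
    finally have "norm (f - h) \<le> R * real (p + 1) powr (- r) + sqrt C * R powr (q / 2) * \<beta> powr (1 - q / 2)"
      using sA sB by linarith
    thus "L1_norm \<phi> p h \<le> C * R powr q * \<beta> powr (1 - q) \<and>
        norm (f - h) \<le> R * real (p + 1) powr (- r) + sqrt C * R powr (q / 2) * \<beta> powr (1 - q / 2)"
      using L1 by simp
  qed
  qed
qed

end
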